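(* Let $B$ be any group and $p\ge 2$ an integer. Suppose $w\in (B\wr C_p)'$ is given by the wreath recursion $$w=(r_1,r_2,\dots,r_{p-1},\; r_1^{-1}\cdots r_{p-1}^{-1}[f,g])$$ with $r_1,\dots,r_{p-1},f,g\in B$. Define elements of $B$ by $a_{1,i}=e$ for $1\le i\le p-1$; $a_{2,1}=(f^{-1})^{r_1^{-1}\cdots r_{p-1}^{-1}}$; $a_{2,i}=r_{i-1}a_{2,i-1}$ for $2\le i\le p$; $a_{1,p}=g^{a_{2,p}^{-1}}$. Then $$w=[(a_{1,1},\dots,a_{1,p})\sigma,\ (a_{2,1},\dots,a_{2,p})].$$
   Context: $C_p=\langle\sigma\rangle$ with $\sigma=(1,2,\dots,p)$ acting on $\{1,\dots,p\}$. Elements of $B\wr C_p=B^p\rtimes C_p$ are written $(b_1,\dots,b_p)\tau$, with multiplication $(g_1,\dots,g_p)\tau\cdot(h_1,\dots,h_p)\rho=(g_1h_{\tau(1)},\dots,g_ph_{\tau(p)})\tau\rho$; $(b_1,\dots,b_p)$ denotes an element with trivial $C_p$-part. Conventions: $[a,b]=aba^{-1}b^{-1}$ and $a^b=bab^{-1}$. *)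

theory Defs
  imports "HOL-Algebra.Algebra"
begin

text \<open>sigma^k acting on {1..p}, with sigma = (1,2,...,p), i.e. sigma i = i+1 mod p.\<close>
definition cyc :: "nat \<Rightarrow> nat \<Rightarrow> nat \<Rightarrow> nat" where
  "cyc p k i = (i - 1 + k) mod p + 1"

text \<open>Wreath product B wr C_p: elements (b,k) stand for (b_1,...,b_p) sigma^k;
  coordinates outside {1..p} are normalised to the identity.\<close>
definition wmult :: "('a,'m) monoid_scheme \<Rightarrow> nat \<Rightarrow> (nat \<Rightarrow> 'a) \<times> nat \<Rightarrow> (nat \<Rightarrow> 'a) \<times> nat \<Rightarrow> (nat \<Rightarrow> 'a) \<times> nat" where
  "wmult B p x y = ((\<lambda>i. if i \<in> {1..p} then fst x i \<otimes>\<^bsub>B\<^esub> fst y (cyc p (snd x) i) else \<one>\<^bsub>B\<^esub>),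
                    (snd x + snd y) mod p)"

definition wreath :: "('a,'m) monoid_scheme \<Rightarrow> nat \<Rightarrow> ((nat \<Rightarrow> 'a) \<times> nat) monoid" where
  "wreath B p = \<lparr> carrier = {x. (\<forall>i\<in>{1..p}. fst x i \<in> carrier B) \<and>
                                    (\<forall>i. i \<notin> {1..p} \<longrightarrow> fst x i = \<one>\<^bsub>B\<^esub>) \<and> snd x < p},
                 monoid.mult = wmult B p,
                 monoid.one = ((\<lambda>i. \<one>\<^bsub>B\<^esub>), 0) \<rparr>"

definition wel :: "('a,'m) monoid_scheme \<Rightarrow> nat \<Rightarrow> (nat \<Rightarrow> 'a) \<Rightarrow> nat \<Rightarrow> (nat \<Rightarrow> 'a) \<times> nat" where
  "wel B p b k = ((\<lambda>i. if i \<in> {1..p} then b i else \<one>\<^bsub>B\<^esub>), k mod p)"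

definition gcomm :: "('a,'m) monoid_scheme \<Rightarrow> 'a \<Rightarrow> 'a \<Rightarrow> 'a" where
  "gcomm G a b = a \<otimes>\<^bsub>G\<^esub> b \<otimes>\<^bsub>G\<^esub> inv\<^bsub>G\<^esub> a \<otimes>\<^bsub>G\<^esub> inv\<^bsub>G\<^esub> b"

definition gconj :: "('a,'m) monoid_scheme \<Rightarrow> 'a \<Rightarrow> 'a \<Rightarrow> 'a" where
  "gconj G a b = b \<otimes>\<^bsub>G\<^esub> a \<otimes>\<^bsub>G\<^esub> inv\<^bsub>G\<^esub> b"

definition lprod :: "('a,'m) monoid_scheme \<Rightarrow> 'a list \<Rightarrow> 'a" where
  "lprod G xs = foldr (\<lambda>x acc. x \<otimes>\<^bsub>G\<^esub> acc) xs \<one>\<^bsub>G\<^esub>"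

end

theory Submission imports Defs begin

lemma cyc_range: "p > 0 \<Longrightarrow> cyc p k i \<in> {1..p}"
  unfolding cyc_def by (auto simp: Suc_le_eq)

lemma aux1: "(a + c) mod p = ((b::nat) + c) mod p \<Longrightarrow> a \<le> b \<Longrightarrow> b < p \<Longrightarrow> a = b"
proof -
  assume h: "(a + c) mod p = (b + c) mod p" "a \<le> b" "b < p"
  have "(b - a) mod p = 0" using h mod_eq_dvd_iff_nat[of "a + c" "b + c" p] by (simp add: dvd_eq_mod_eq_0)
  moreover have "b - a < p" using h by simp
  ultimately have "b - a = 0" by simp
  then show "a = b" using h by simp
qed
lemma mod_cancel_lt: "(a + c) mod p = ((b::nat) + c) mod p \<Longrightarrow> a < p \<Longrightarrow> b < p \<Longrightarrow> a = b"
  using aux1[of a c p b] aux1[of b c p a] by (cases "a \<le> b") auto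

lemma cyc0: "i \<in> {1..p} \<Longrightarrow> cyc p 0 i = i"
  unfolding cyc_def by auto

lemma cyc1_lt: "1 \<le> i \<Longrightarrow> i < p \<Longrightarrow> cyc p 1 i = i + 1"
  unfolding cyc_def by auto

lemma cyc1_p: "p > 0 \<Longrightarrow> cyc p 1 p = 1"
  unfolding cyc_def by auto

lemma cyc_back: assumes "i \<in> {1..p}" shows "cyc p (p-1) (cyc p 1 i) = i"
proof (cases "i < p")
  case True
  have i1: "1 \<le> i" using assms by simp
  have c1: "cyc p 1 i = i + 1" using i1 True cyc1_lt by blast
  have e: "i + 1 - 1 + (p - 1) = (i - 1) + p" using i1 True by linarith
  have e2: "((i - 1) + p) mod p = i - 1" using True by simp
  show ?thesis unfolding c1 unfolding cyc_def e e2 using i1 by linarith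
next
  case False
  then have "i = p" using assms by auto
  then show ?thesis using assms unfolding cyc_def by auto
qed

lemma cyc_fwd: assumes "i \<in> {1..p}" shows "cyc p 1 (cyc p (p-1) i) = i"
proof (cases "i = 1")
  case True
  then show ?thesis using assms unfolding cyc_def by auto
next
  case False
  have e: "i - 1 + (p - 1) = (i - 2) + p" using assms False by auto
  have e2: "((i - 2) + p) mod p = i - 2" using assms by auto
  have i2: "2 \<le> i" using assms False by auto
  have c1: "cyc p (p-1) i = i - 1" unfolding cyc_def e e2 using i2 by linarith
  have e3: "i - 1 - 1 + 1 = i - 1" using i2 by linarith
  have e4: "(i - 1) mod p = i - 1" using assms by auto
  show ?thesis unfolding c1 unfolding cyc_def e3 e4 using i2 by linarith
qed

lemma wreath_left_inv_unique:
  assumes G: "group B" and p: "p > 0"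
    and x: "x \<in> carrier (wreath B p)" and y: "y \<in> carrier (wreath B p)" and z: "z \<in> carrier (wreath B p)"
    and yx: "y \<otimes>\<^bsub>wreath B p\<^esub> x = \<one>\<^bsub>wreath B p\<^esub>"
    and zx: "z \<otimes>\<^bsub>wreath B p\<^esub> x = \<one>\<^bsub>wreath B p\<^esub>"
  shows "z = y"
proof -
  interpret group B by fact
  have "snd (y \<otimes>\<^bsub>wreath B p\<^esub> x) = snd (\<one>\<^bsub>wreath B p\<^esub>)" using yx by simp
  then have sy: "(snd y + snd x) mod p = 0" by (simp add: wreath_def wmult_def)
  have "snd (z \<otimes>\<^bsub>wreath B p\<^esub> x) = snd (\<one>\<^bsub>wreath B p\<^esub>)" using zx by simp
  then have sz: "(snd z + snd x) mod p = 0" by (simp add: wreath_def wmult_def)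
  have ly: "snd y < p" using y by (simp add: wreath_def)
  have lz: "snd z < p" using z by (simp add: wreath_def)
  have s: "snd z = snd y" using mod_cancel_lt[of "snd z" "snd x" p "snd y"] sy sz ly lz by simp
  have "fst z i = fst y i" for i
  proof (cases "i \<in> {1..p}")
    case True
    have c: "fst x (cyc p (snd y) i) \<in> carrier B" using x cyc_range[OF p] by (auto simp: wreath_def)
    have "fst (y \<otimes>\<^bsub>wreath B p\<^esub> x) i = fst (\<one>\<^bsub>wreath B p\<^esub>) i" using yx by simp
    then have 1: "fst y i \<otimes>\<^bsub>B\<^esub> fst x (cyc p (snd y) i) = \<one>\<^bsub>B\<^esub>"
      using True by (simp add: wreath_def wmult_def)
    have "fst (z \<otimes>\<^bsub>wreath B p\<^esub> x) i = fst (\<one>\<^bsub>wreath B p\<^esub>) i" using zx by simp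
    then have 2: "fst z i \<otimes>\<^bsub>B\<^esub> fst x (cyc p (snd y) i) = \<one>\<^bsub>B\<^esub>"
      using True s by (simp add: wreath_def wmult_def)
    have "fst y i \<in> carrier B" "fst z i \<in> carrier B" using y z True by (auto simp: wreath_def)
    then show ?thesis using inv_equality[OF 1 c] inv_equality[OF 2 c] by simp
  next
    case False then show ?thesis using y z by (auto simp: wreath_def)
  qed
  then show ?thesis using s by (simp add: prod_eq_iff fun_eq_iff)
qed

lemma wreath_inv:
  assumes G: "group B" and p: "p > 0"
    and x: "x \<in> carrier (wreath B p)" and y: "y \<in> carrier (wreath B p)"
    and yx: "y \<otimes>\<^bsub>wreath B p\<^esub> x = \<one>\<^bsub>wreath B p\<^esub>"
    and xy: "x \<otimes>\<^bsub>wreath B p\<^esub> y = \<one>\<^bsub>wreath B p\<^esub>"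
  shows "inv\<^bsub>wreath B p\<^esub> x = y"
  unfolding m_inv_def
  apply (rule the_equality)
  using y yx xy apply blast
  using wreath_left_inv_unique[OF G p x y] yx by blast

lemma (in monoid) lprod_closed: "set xs \<subseteq> carrier G \<Longrightarrow> lprod G xs \<in> carrier G"
  by (induction xs) (auto simp: lprod_def)

lemma (in monoid) lprod_snoc: "set xs \<subseteq> carrier G \<Longrightarrow> x \<in> carrier G \<Longrightarrow>
   lprod G (xs @ [x]) = lprod G xs \<otimes> x"
proof (induction xs)
  case Nil then show ?case by (simp add: lprod_def)
next
  case (Cons a xs)
  have ac: "a \<in> carrier G" and xsc: "set xs \<subseteq> carrier G" using Cons.prems by auto
  have c: "lprod G xs \<in> carrier G" using xsc by (rule lprod_closed)
  have e1: "lprod G ((a # xs) @ [x]) = a \<otimes> lprod G (xs @ [x])" by (simp add: lprod_def)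
  have e2: "lprod G (xs @ [x]) = lprod G xs \<otimes> x" using Cons.IH xsc Cons.prems(2) by blast
  have e3: "lprod G (a # xs) = a \<otimes> lprod G xs" by (simp add: lprod_def)
  show ?case unfolding e1 e2 e3 using ac c Cons.prems(2) by (simp add: m_assoc)
qed

lemma (in group) lc1: "x \<in> carrier G \<Longrightarrow> y \<in> carrier G \<Longrightarrow> inv x \<otimes> (x \<otimes> y) = y"
  by (simp add: m_assoc[symmetric])

lemma (in group) lc2: "x \<in> carrier G \<Longrightarrow> y \<in> carrier G \<Longrightarrow> x \<otimes> (inv x \<otimes> y) = y"
  by (simp add: m_assoc[symmetric])

lemma cyc_back': "Suc 0 \<le> i \<Longrightarrow> i \<le> p \<Longrightarrow> cyc p (p - Suc 0) (cyc p (Suc 0) i) = i"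
  using cyc_back[of i p] by simp

lemma cyc0': "Suc 0 \<le> i \<Longrightarrow> i \<le> p \<Longrightarrow> cyc p 0 i = i"
  using cyc0[of i p] by simp

lemma cyc_ge1: "Suc 0 \<le> cyc p k i" unfolding cyc_def by simp
lemma cyc_le: "p > 0 \<Longrightarrow> cyc p k i \<le> p" unfolding cyc_def by (simp add: Suc_le_eq)

lemma wel_carrier: "p > 0 \<Longrightarrow> (\<forall>i\<in>{1..p}. b i \<in> carrier B) \<Longrightarrow> wel B p b k \<in> carrier (wreath B p)"
  unfolding wel_def wreath_def by auto

lemma (in group) main_aux:
  fixes p :: nat and r :: "nat \<Rightarrow> 'a" and f g :: 'a
    and w :: "(nat \<Rightarrow> 'a) \<times> nat"
    and a1 a2 :: "nat \<Rightarrow> 'a"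
  assumes "p \<ge> 2"
    and r: "\<forall>i\<in>{1..p-1}. r i \<in> carrier G"
    and "f \<in> carrier G" and "g \<in> carrier G"
    and w: "w = wel G p (\<lambda>i. if i < p then r i
               else lprod G (map (\<lambda>j. inv r j) [1..<p]) \<otimes> gcomm G f g) 0"
    and a11: "\<forall>i\<in>{1..p-1}. a1 i = \<one>"
    and a21: "a2 1 = gconj G (inv f) (lprod G (map (\<lambda>j. inv r j) [1..<p]))"
    and a2i: "\<forall>i\<in>{2..p}. a2 i = r (i - 1) \<otimes> a2 (i - 1)"
    and a1p: "a1 p = gconj G g (inv (a2 p))"
  shows "w = gcomm (wreath G p) (wel G p a1 1) (wel G p a2 0)"
proof -
    have p0: "p > 0" using assms(1) by auto
  define L where "L i = lprod G (map (\<lambda>j. inv r j) [1..<i])" for i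
  have Lc: "i \<le> p \<Longrightarrow> L i \<in> carrier G" for i
    unfolding L_def using r by (intro lprod_closed) auto
  define R where "R = L p"
  have Rc: "R \<in> carrier G" using Lc R_def by auto
  have fc: "f \<in> carrier G" and gc: "g \<in> carrier G" by fact+
  have a21': "a2 1 = R \<otimes> inv f \<otimes> inv R" using a21 unfolding R_def L_def gconj_def by simp
  have a21c: "a2 1 \<in> carrier G" using a21' Rc fc by simp
  have key: "k + 1 \<le> p \<Longrightarrow> a2 (k+1) \<in> carrier G \<and> L (k+1) \<otimes> a2 (k+1) = a2 1" for k
  proof (induction k)
    case 0
    then show ?case using a21c by (simp add: L_def lprod_def)
  next
    case (Suc k)
    then have IH: "a2 (k+1) \<in> carrier G" "L (k+1) \<otimes> a2 (k+1) = a2 1" by auto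
    have rk: "r (k+1) \<in> carrier G" using r Suc.prems by auto
    have e: "a2 (Suc k + 1) = r (k+1) \<otimes> a2 (k+1)" using a2i Suc.prems by auto
    have Lk: "L (Suc k + 1) = L (k+1) \<otimes> inv r (k+1)"
    proof -
      have sp: "map (\<lambda>j. inv r j) [1..<Suc k + 1] = map (\<lambda>j. inv r j) [1..<k+1] @ [inv r (k+1)]" by simp
      show ?thesis unfolding L_def sp by (rule lprod_snoc) (use r Suc.prems in auto)
    qed
    have Lkc: "L (k+1) \<in> carrier G" using Lc Suc.prems by auto
    have "L (Suc k + 1) \<otimes> a2 (Suc k + 1) = L (k+1) \<otimes> a2 (k+1)"
      unfolding e Lk using IH rk Lkc by (simp add: m_assoc lc1)
    then show ?case using IH rk e by simp
  qed
  have "a2 p \<in> carrier G \<and> R \<otimes> a2 p = a2 1" using key[of "p-1"] p0 R_def by simp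
  then have a2pc: "a2 p \<in> carrier G" and Ra2p: "R \<otimes> a2 p = a2 1" by auto
  have "a2 p = inv R \<otimes> (R \<otimes> a2 p)" using Rc a2pc by (simp add: lc1)
  also have "\<dots> = inv f \<otimes> inv R" unfolding Ra2p a21' using Rc fc by (simp add: m_assoc lc1)
  finally have a2p: "a2 p = inv f \<otimes> inv R" .
  have a2c: "\<forall>i\<in>{1..p}. a2 i \<in> carrier G"
  proof
    fix i assume "i \<in> {1..p}"
    then show "a2 i \<in> carrier G" using key[of "i-1"] by auto
  qed
  have a1c: "\<forall>i\<in>{1..p}. a1 i \<in> carrier G"
  proof
    fix i assume i: "i \<in> {1..p}"
    show "a1 i \<in> carrier G"
    proof (cases "i = p")
      case True then show ?thesis using a1p a2pc gc by (simp add: gconj_def)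
    next
      case False then show ?thesis using a11 i by auto
    qed
  qed
  let ?W = "wreath G p"
  define Xw where "Xw = wel G p a1 1"
  define Xiw where "Xiw = wel G p (\<lambda>i. inv a1 (cyc p (p-1) i)) (p-1)"
  define Yw where "Yw = wel G p a2 0"
  define Yiw where "Yiw = wel G p (\<lambda>i. inv a2 i) 0"
  have Xc: "Xw \<in> carrier ?W" unfolding Xw_def using a1c p0 by (intro wel_carrier) auto
  have Yc: "Yw \<in> carrier ?W" unfolding Yw_def using a2c p0 by (intro wel_carrier) auto
  have Xic: "Xiw \<in> carrier ?W" unfolding Xiw_def using a1c p0 cyc_range[OF p0] by (intro wel_carrier) auto
  have Yic: "Yiw \<in> carrier ?W" unfolding Yiw_def using a2c p0 by (intro wel_carrier) auto
  have m1: "1 mod p = 1" using assms(1) by auto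
  have m2: "(1 + (p - 1)) mod p = 0" "(p - 1 + 1) mod p = 0" using p0 by auto
  have "Xiw \<otimes>\<^bsub>?W\<^esub> Xw = \<one>\<^bsub>?W\<^esub>"
    unfolding Xw_def Xiw_def wel_def wreath_def wmult_def
    using a1c p0 m1 m2 by (simp add: fun_eq_iff cyc_ge1 cyc_le)
  moreover have "Xw \<otimes>\<^bsub>?W\<^esub> Xiw = \<one>\<^bsub>?W\<^esub>"
    unfolding Xw_def Xiw_def wel_def wreath_def wmult_def
    using a1c p0 m1 m2 by (simp add: fun_eq_iff cyc_ge1 cyc_le cyc_back')
  ultimately have iX: "inv\<^bsub>?W\<^esub> Xw = Xiw" using wreath_inv[OF is_group p0 Xc Xic] by simp
  have "Yiw \<otimes>\<^bsub>?W\<^esub> Yw = \<one>\<^bsub>?W\<^esub>" "Yw \<otimes>\<^bsub>?W\<^esub> Yiw = \<one>\<^bsub>?W\<^esub>"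
    unfolding Yw_def Yiw_def wel_def wreath_def wmult_def
    using a2c p0 by (simp_all add: fun_eq_iff cyc0')
  then have iY: "inv\<^bsub>?W\<^esub> Yw = Yiw" using wreath_inv[OF is_group p0 Yc Yic] by simp
  have comm: "gcomm ?W Xw Yw = ((\<lambda>i. if i \<in> {1..p} then a1 i \<otimes> a2 (cyc p 1 i) \<otimes> inv a1 i \<otimes> inv a2 i else \<one>), 0)"
    unfolding gcomm_def iX iY
    unfolding Xw_def Xiw_def Yw_def Yiw_def wel_def wreath_def wmult_def
    using p0 m1 m2 by (simp add: fun_eq_iff cyc_ge1 cyc_le cyc_back' cyc0')
  have a1p': "a1 p = inv (a2 p) \<otimes> g \<otimes> a2 p" using a1p a2pc unfolding gconj_def by simp
  have ia1: "inv (a1 p) = inv (a2 p) \<otimes> inv g \<otimes> a2 p" using a1p' a2pc gc by (simp add: inv_mult_group m_assoc)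
  have ia2: "inv (a2 p) = R \<otimes> f" using a2p Rc fc by (simp add: inv_mult_group)
  have last: "R \<otimes> gcomm G f g = a1 p \<otimes> a2 1 \<otimes> inv a1 p \<otimes> inv a2 p"
    unfolding ia1 unfolding a1p' unfolding ia2 unfolding a2p a21' gcomm_def
    using Rc fc gc by (simp add: m_assoc lc1 lc2)
  have pt: "(if i < p then r i else lprod G (map (\<lambda>j. inv r j) [1..<p]) \<otimes> gcomm G f g) =
          a1 i \<otimes> a2 (cyc p 1 i) \<otimes> inv a1 i \<otimes> inv a2 i" if i: "Suc 0 \<le> i" "i \<le> p" for i
  proof (cases "i < p")
    case True
    then have "a2 (cyc p 1 i) = r i \<otimes> a2 i" using a2i i cyc1_lt[of i p] by auto
    then show ?thesis using True i a11 r a2c by (simp add: m_assoc)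
  next
    case False
    then have "i = p" using i by auto
    then show ?thesis using last cyc1_p[OF p0] unfolding R_def L_def by simp
  qed
  have F: "(\<lambda>i. if i \<in> {1..p} then (if i < p then r i else lprod G (map (\<lambda>j. inv r j) [1..<p]) \<otimes> gcomm G f g) else \<one>)
     = (\<lambda>i. if i \<in> {1..p} then a1 i \<otimes> a2 (cyc p 1 i) \<otimes> inv a1 i \<otimes> inv a2 i else \<one>)"
  proof (rule ext)
    fix i
    show "(if i \<in> {1..p} then (if i < p then r i else lprod G (map (\<lambda>j. inv r j) [1..<p]) \<otimes> gcomm G f g) else \<one>)
     = (if i \<in> {1..p} then a1 i \<otimes> a2 (cyc p 1 i) \<otimes> inv a1 i \<otimes> inv a2 i else \<one>)"
    proof (cases "i \<in> {1..p}")
      case True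
      then have h: "Suc 0 \<le> i" "i \<le> p" by auto
      show ?thesis unfolding if_P[OF True] by (rule pt[OF h])
    next
      case False
      show ?thesis unfolding if_not_P[OF False] by (rule refl)
    qed
  qed
  show ?thesis
    unfolding Xw_def[symmetric] Yw_def[symmetric] comm unfolding w wel_def F by simp
qed

theorem mainTheorem3:
  fixes B :: "('a,'m) monoid_scheme" and p :: nat
    and r :: "nat \<Rightarrow> 'a" and f g :: 'a
    and w :: "(nat \<Rightarrow> 'a) \<times> nat"
    and a1 a2 :: "nat \<Rightarrow> 'a"
  assumes "group B" and "p \<ge> 2"
    and r: "\<forall>i\<in>{1..p-1}. r i \<in> carrier B"
    and "f \<in> carrier B" and "g \<in> carrier B"
    and w: "w = wel B p (\<lambda>i. if i < p then r i
               else lprod B (map (\<lambda>j. inv\<^bsub>B\<^esub> r j) [1..<p]) \<otimes>\<^bsub>B\<^esub> gcomm B f g) 0"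
    and a11: "\<forall>i\<in>{1..p-1}. a1 i = \<one>\<^bsub>B\<^esub>"
    and a21: "a2 1 = gconj B (inv\<^bsub>B\<^esub> f) (lprod B (map (\<lambda>j. inv\<^bsub>B\<^esub> r j) [1..<p]))"
    and a2i: "\<forall>i\<in>{2..p}. a2 i = r (i - 1) \<otimes>\<^bsub>B\<^esub> a2 (i - 1)"
    and a1p: "a1 p = gconj B g (inv\<^bsub>B\<^esub> (a2 p))"
  shows "w = gcomm (wreath B p) (wel B p a1 1) (wel B p a2 0)"
  using group.main_aux[OF assms] .

end
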